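(* Let $X$ be a Polish space with a complete metric and a countable basis $\mathcal O$, and let $I$ be a $\sigma$-ideal on $X$. Then the ideal $J_I$ is weakly selective: for every $J_I$-positive set $a\subseteq\mathcal O$ and every function $f:a\to\omega$, there is a $J_I$-positive $b\subseteq a$ such that $f\restriction b$ is constant or injective.
   Context: For $a\subseteq\mathcal O$, $\mathrm{cl}(a)=\{x\in X:\forall\varepsilon>0\ \exists O\in a\ O\subseteq B_\varepsilon(x)\}$, where $B_\varepsilon(x)$ is the open ball of radius $\varepsilon$ around $x$. $J_I=\{a\subseteq\mathcal O:\mathrm{cl}(a)\in I\}$; $a$ is $J_I$-positive if $a\notin J_I$. *)

theory Defs
  imports "HOL-Analysis.Analysis"
begin

definition sigma_ideal :: "'a set set \<Rightarrow> bool" where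
  "sigma_ideal I \<longleftrightarrow>
     (\<forall>A\<in>I. \<forall>B. B \<subseteq> A \<longrightarrow> B \<in> I) \<and>
     (\<forall>F. countable F \<and> F \<subseteq> I \<longrightarrow> \<Union>F \<in> I)"

definition cl :: "'a::metric_space set set \<Rightarrow> 'a set" where
  "cl a = {x. \<forall>e>0. \<exists>U\<in>a. U \<subseteq> ball x e}"

definition J_ideal :: "'a::metric_space set set \<Rightarrow> 'a set set \<Rightarrow> 'a set set set" where
  "J_ideal Ob I = {a. a \<subseteq> Ob \<and> cl a \<in> I}"

definition J_positive :: "'a::metric_space set set \<Rightarrow> 'a set set \<Rightarrow> 'a set set \<Rightarrow> bool" where
  "J_positive Ob I a \<longleftrightarrow> a \<subseteq> Ob \<and> a \<notin> J_ideal Ob I"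

end

theory Submission
  imports Defs
begin

lemma main_lemma:
  fixes Ob :: "'a::metric_space set set" and I :: "'a set set"
    and a :: "'a set set" and f :: "'a set \<Rightarrow> nat"
  assumes cOb: "countable Ob" and B: "topological_basis Ob" and sI: "sigma_ideal I"
    and pos: "J_positive Ob I a"
  shows "\<exists>b. b \<subseteq> a \<and> J_positive Ob I b \<and> ((\<exists>n. \<forall>U\<in>b. f U = n) \<or> inj_on f b)"
proof -
  have aOb: "a \<subseteq> Ob" and claI: "cl a \<notin> I"
    using pos unfolding J_positive_def J_ideal_def by auto
  have sub: "\<And>A B. A \<in> I \<Longrightarrow> B \<subseteq> A \<Longrightarrow> B \<in> I"
    and un: "\<And>F. countable F \<Longrightarrow> F \<subseteq> I \<Longrightarrow> \<Union>F \<in> I"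
    using sI unfolding sigma_ideal_def by blast+
  define an where "an n = {U\<in>a. f U = n}" for n
  show ?thesis
  proof (cases "\<exists>n. cl (an n) \<notin> I")
    case True
    then obtain n where "cl (an n) \<notin> I" by blast
    then show ?thesis
      using aOb by (intro exI[of _ "an n"]) (auto simp: an_def J_positive_def J_ideal_def)
  next
    case False
    hence anI: "\<And>n. cl (an n) \<in> I" by blast
    define Y where "Y = cl a - (\<Union>n. cl (an n))"
    have YnI: "Y \<notin> I"
    proof
      assume "Y \<in> I"
      hence "\<Union>(insert Y (range (\<lambda>n. cl (an n)))) \<in> I" using anI by (intro un) auto
      moreover have "cl a \<subseteq> \<Union>(insert Y (range (\<lambda>n. cl (an n))))" unfolding Y_def by auto
      ultimately show False using sub claI by blast
    qed
    have "{} \<in> I" using un[of "{}"] by simp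
    hence "Y \<noteq> {}" using YnI by auto
    then obtain y0 where y0: "y0 \<in> Y" by blast
    define S where "S V = {n. \<exists>U\<in>a. U \<subseteq> V \<and> f U = n}" for V
    define K where "K = {V\<in>Ob. infinite (S V)}"
    have key: "V \<in> K" if yY: "y \<in> Y" and yV: "y \<in> V" and VOb: "V \<in> Ob" for y V
    proof (rule ccontr)
      assume "V \<notin> K"
      hence fin: "finite (S V)" using VOb by (auto simp: K_def)
      have "open V" using B VOb by (rule topological_basis_open)
      then obtain r where r: "r > 0" "ball y r \<subseteq> V" using yV open_contains_ball by blast
      have "\<forall>n. \<exists>e>0. \<forall>U\<in>an n. \<not> U \<subseteq> ball y e"
        using yY unfolding Y_def cl_def by auto
      then obtain e where e: "\<And>n. e n > 0" "\<And>n U. U \<in> an n \<Longrightarrow> \<not> U \<subseteq> ball y (e n)"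
        by metis
      define d where "d = Min (insert r (e ` S V))"
      have "d > 0" using fin r e(1) by (auto simp: d_def)
      then obtain U where U: "U \<in> a" "U \<subseteq> ball y d" using yY unfolding Y_def cl_def by auto
      have "d \<le> r" by (simp add: d_def fin)
      hence "U \<subseteq> V" using U r by (meson order.trans subset_ball)
      hence "f U \<in> S V" using U by (auto simp: S_def)
      hence "d \<le> e (f U)" by (simp add: d_def fin)
      hence "U \<subseteq> ball y (e (f U))" using U(2) by (meson order.trans subset_ball)
      moreover have "U \<in> an (f U)" using U by (simp add: an_def)
      ultimately show False using e(2) by blast
    qed
    obtain V0 where "V0 \<in> Ob" "y0 \<in> V0"
      using topological_basisE[OF B open_UNIV, of y0] by blast
    hence Kne: "K \<noteq> {}" using key y0 by blast
    have cK: "countable K" using cOb by (auto simp: K_def intro: countable_subset)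
    define V where "V = from_nat_into K"
    have VK: "V k \<in> K" for k using Kne by (simp add: V_def from_nat_into)
    have rV: "range V = K" by (simp add: V_def cK Kne)
    have ex: "\<exists>n. n \<in> S (V k) \<and> n > p" for k p
      using VK[of k] unfolding K_def infinite_nat_iff_unbounded by blast
    define m where "m = rec_nat (SOME n. n \<in> S (V 0)) (\<lambda>k p. SOME n. n \<in> S (V (Suc k)) \<and> n > p)"
    have m0: "m 0 \<in> S (V 0)" unfolding m_def using ex[of 0 0] by (simp, metis someI)
    have mS: "m (Suc k) \<in> S (V (Suc k)) \<and> m (Suc k) > m k" for k
      using someI_ex[OF ex[of "Suc k" "m k"]] by (simp add: m_def)
    have mall: "m k \<in> S (V k)" for k using m0 mS by (cases k) auto
    have smono: "strict_mono m" using mS by (simp add: strict_mono_Suc_iff)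
    have "\<forall>k. \<exists>U. U \<in> a \<and> U \<subseteq> V k \<and> f U = m k" using mall by (auto simp: S_def)
    then obtain Us where Us: "\<And>k. Us k \<in> a \<and> Us k \<subseteq> V k \<and> f (Us k) = m k" by metis
    have Ycl: "Y \<subseteq> cl (range Us)"
    proof
      fix y assume y: "y \<in> Y"
      show "y \<in> cl (range Us)" unfolding cl_def
      proof (intro CollectI allI impI)
        fix e :: real assume "e > 0"
        then obtain W where W: "W \<in> Ob" "y \<in> W" "W \<subseteq> ball y e"
          using topological_basisE[OF B open_ball, of y y e] by auto
        hence "W \<in> K" using key y by blast
        then obtain k where "V k = W" using rV by (metis imageE)
        thus "\<exists>U\<in>range Us. U \<subseteq> ball y e" using Us[of k] W by blast
      qed
    qed
    have inj: "inj_on f (range Us)"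
    proof (rule inj_onI)
      fix x z assume "x \<in> range Us" "z \<in> range Us" "f x = f z"
      then obtain i j where "x = Us i" "z = Us j" "m i = m j" using Us by auto
      thus "x = z" using smono strict_mono_eq by metis
    qed
    have "cl (range Us) \<notin> I" using Ycl YnI sub by blast
    thus ?thesis using Us aOb inj
      by (intro exI[of _ "range Us"]) (auto simp: J_positive_def J_ideal_def)
  qed
qed

theorem proposition4p2:
  fixes Ob :: "'a::polish_space set set" and I :: "'a set set"
  assumes "countable Ob" and "topological_basis Ob"
    and "sigma_ideal I"
  shows "\<forall>a (f :: 'a set \<Rightarrow> nat). J_positive Ob I a \<longrightarrow>
           (\<exists>b. b \<subseteq> a \<and> J_positive Ob I b \<and>
                ((\<exists>n. \<forall>U\<in>b. f U = n) \<or> inj_on f b))"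
  using main_lemma[OF assms] by blast

end
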